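(* Let $(E,\tau)$ be a locally solid vector lattice, where $\tau$ is a uo-Lebesgue topology. Suppose that $C_\tau=E$ or, equivalently, that $E$ has the countable sup property (this holds in particular when $C_\tau$ has a countable order basis, or when $\tau$ is metrisable). Then: (1) every $\tau$-convergent net in $E$ has an embedded sequence that is uo-convergent as well as $\tau$-convergent to the same limit; (2) a sequence in $E$ is $\tau$-convergent to $x\in E$ if and only if every subsequence has a further subsequence that is uo-convergent to $x$.
   Context: All vector lattices are real and Archimedean; linear topologies are Hausdorff. A locally solid topology on a vector lattice is a linear topology such that zero has a neighbourhood basis of solid sets. A net $(x_\alpha)$ order converges to $x$ if there is a net $y_\beta\downarrow0$ such that for each $\beta_0$ eventually $|x_\alpha-x|\leq y_{\beta_0}$; it uo-converges to $x$ if $|x_\alpha-x|\wedge|y|$ order converges to $0$ for every $y\in E$. A uo-Lebesgue topology is a locally solid topology in which every uo-convergent net converges topologically to the same limit. A sequence $(V_n)$ of neighbourhoods of zero is normal if $V_{n+1}+V_{n+1}\subseteq V_n$; the carrier $C_\tau$ is the union of the disjoint complements $N^{\mathrm d}$ where $N=\bigcap_nV_n$ ranges over intersections of normal sequences of solid $\tau$-neighbourhoods of zero. An order basis of a vector lattice $G$ is a non-empty $A\subseteq G$ with $A^{\mathrm d}=\{0\}$. $E$ has the countable sup property if every subset with a supremum contains an at most countable subset with the same supremum. Embedded sequence: given a net $(x_\alpha)_{\alpha\in A}$, a sequence $(x_{\alpha_n})_{n\geq1}$ with $\alpha_1\leq\alpha_2\leq\dotsb$, strictly increasing when $A$ has no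 largest element. *)

theory Defs
  imports "HOL-Analysis.Analysis"
begin

text \<open>Archimedean property is an explicit hypothesis.  Nets are modelled as in Isabelle
  by filters on an index type; a net over a directed set (I, le) uses net_filter I le.\<close>

definition labs :: "'a::{ordered_real_vector,lattice} \<Rightarrow> 'a" where
  "labs x = sup x (- x)"

definition archimedean_vl :: "'a::{ordered_real_vector,lattice} itself \<Rightarrow> bool" where
  "archimedean_vl _ \<longleftrightarrow>
     (\<forall>x y::'a. 0 \<le> x \<and> (\<forall>n::nat. real n *\<^sub>R x \<le> y) \<longrightarrow> x = 0)"

definition is_sup_of :: "'a::order set \<Rightarrow> 'a \<Rightarrow> bool" where
  "is_sup_of S s \<longleftrightarrow> (\<forall>x\<in>S. x \<le> s) \<and> (\<forall>u. (\<forall>x\<in>S. x \<le> u) \<longrightarrow> s \<le> u)"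

definition is_inf_of :: "'a::order set \<Rightarrow> 'a \<Rightarrow> bool" where
  "is_inf_of S s \<longleftrightarrow> (\<forall>x\<in>S. s \<le> x) \<and> (\<forall>u. (\<forall>x\<in>S. u \<le> x) \<longrightarrow> u \<le> s)"

definition countable_sup_property :: "'a::{ordered_real_vector,lattice} itself \<Rightarrow> bool" where
  "countable_sup_property _ \<longleftrightarrow>
     (\<forall>(S::'a set) s. is_sup_of S s \<longrightarrow> (\<exists>T\<subseteq>S. countable T \<and> is_sup_of T s))"

definition directed_set :: "'i set \<Rightarrow> ('i \<Rightarrow> 'i \<Rightarrow> bool) \<Rightarrow> bool" where
  "directed_set I le \<longleftrightarrow> I \<noteq> {} \<and> (\<forall>a\<in>I. le a a)
     \<and> (\<forall>a\<in>I. \<forall>b\<in>I. \<forall>c\<in>I. le a b \<and> le b c \<longrightarrow> le a c)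
     \<and> (\<forall>a\<in>I. \<forall>b\<in>I. \<exists>c\<in>I. le a c \<and> le b c)"

definition net_filter :: "'i set \<Rightarrow> ('i \<Rightarrow> 'i \<Rightarrow> bool) \<Rightarrow> 'i filter" where
  "net_filter I le = (INF a\<in>I. principal {b\<in>I. le a b})"

text \<open>The dominating net y_beta \<down> 0 is represented by its range D, a nonempty
  downward directed set with infimum 0 (every such set is a net decreasing to 0,
  indexed by itself).\<close>
definition order_conv :: "'i filter \<Rightarrow> ('i \<Rightarrow> 'a::{ordered_real_vector,lattice}) \<Rightarrow> 'a \<Rightarrow> bool" where
  "order_conv F f x \<longleftrightarrow>
     (\<exists>D::'a set. D \<noteq> {} \<and> (\<forall>a\<in>D. \<forall>b\<in>D. \<exists>c\<in>D. c \<le> a \<and> c \<le> b)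
        \<and> is_inf_of D 0
        \<and> (\<forall>d\<in>D. eventually (\<lambda>i. labs (f i - x) \<le> d) F))"

definition uo_conv :: "'i filter \<Rightarrow> ('i \<Rightarrow> 'a::{ordered_real_vector,lattice}) \<Rightarrow> 'a \<Rightarrow> bool" where
  "uo_conv F f x \<longleftrightarrow> (\<forall>y. order_conv F (\<lambda>i. inf (labs (f i - x)) (labs y)) 0)"

definition top_conv :: "'a topology \<Rightarrow> 'i filter \<Rightarrow> ('i \<Rightarrow> 'a) \<Rightarrow> 'a \<Rightarrow> bool" where
  "top_conv \<tau> F f x \<longleftrightarrow> (\<forall>U. openin \<tau> U \<and> x \<in> U \<longrightarrow> eventually (\<lambda>i. f i \<in> U) F)"

definition solid :: "'a::{ordered_real_vector,lattice} set \<Rightarrow> bool" where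
  "solid S \<longleftrightarrow> (\<forall>x\<in>S. \<forall>y. labs y \<le> labs x \<longrightarrow> y \<in> S)"

definition nhd0 :: "'a::real_vector topology \<Rightarrow> 'a set \<Rightarrow> bool" where
  "nhd0 \<tau> V \<longleftrightarrow> (\<exists>U. openin \<tau> U \<and> 0 \<in> U \<and> U \<subseteq> V)"

definition linear_topology :: "'a::real_vector topology \<Rightarrow> bool" where
  "linear_topology \<tau> \<longleftrightarrow> topspace \<tau> = UNIV \<and> Hausdorff_space \<tau>
     \<and> continuous_map (prod_topology \<tau> \<tau>) \<tau> (\<lambda>(x, y). x + y)
     \<and> continuous_map (prod_topology euclideanreal \<tau>) \<tau> (\<lambda>(c, x). c *\<^sub>R x)"

definition locally_solid :: "'a::{ordered_real_vector,lattice} topology \<Rightarrow> bool" where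
  "locally_solid \<tau> \<longleftrightarrow> linear_topology \<tau>
     \<and> (\<forall>V. nhd0 \<tau> V \<longrightarrow> (\<exists>W. nhd0 \<tau> W \<and> solid W \<and> W \<subseteq> V))"

text \<open>Nets are represented by filters (every net determines the filter of its tails, and
  both uo- and topological convergence only depend on that image filter; every filter
  on E arises this way); so we quantify over all filters on E with the identity map.\<close>
definition uo_Lebesgue :: "'a::{ordered_real_vector,lattice} topology \<Rightarrow> bool" where
  "uo_Lebesgue \<tau> \<longleftrightarrow> locally_solid \<tau>
     \<and> (\<forall>(F::'a filter) x. uo_conv F id x \<longrightarrow> top_conv \<tau> F id x)"

definition disj_compl :: "'a::{ordered_real_vector,lattice} set \<Rightarrow> 'a set" where
  "disj_compl N = {x. \<forall>y\<in>N. inf (labs x) (labs y) = 0}"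

definition normal_seq :: "('a::real_vector) topology \<Rightarrow> (nat \<Rightarrow> 'a set) \<Rightarrow> bool" where
  "normal_seq \<tau> V \<longleftrightarrow> (\<forall>n. nhd0 \<tau> (V n) \<and> {a + b | a b. a \<in> V (Suc n) \<and> b \<in> V (Suc n)} \<subseteq> V n)"

definition carrier_top :: "'a::{ordered_real_vector,lattice} topology \<Rightarrow> 'a set" where
  "carrier_top \<tau> = (\<Union>{disj_compl (\<Inter>n. V n) | V. normal_seq \<tau> V \<and> (\<forall>n. solid (V n))})"

definition embedded_seq :: "'i set \<Rightarrow> ('i \<Rightarrow> 'i \<Rightarrow> bool) \<Rightarrow> (nat \<Rightarrow> 'i) \<Rightarrow> bool" where
  "embedded_seq I le \<alpha> \<longleftrightarrow> (\<forall>n. \<alpha> n \<in> I \<and> le (\<alpha> n) (\<alpha> (Suc n)))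
     \<and> ((\<not> (\<exists>m\<in>I. \<forall>a\<in>I. le a m)) \<longrightarrow> (\<forall>n. \<not> le (\<alpha> (Suc n)) (\<alpha> n)))"

end

theory Submission
  imports Defs
begin


section \<open>Lattice algebra\<close>

lemma vl_add_inf_right:
  fixes a b c :: "'a::{ordered_real_vector,lattice}"
  shows "inf a b + c = inf (a + c) (b + c)"
proof (intro order.antisym)
  show "inf (a + c) (b + c) \<le> inf a b + c"
    by (metis add_le_cancel_right diff_add_cancel inf_greatest inf_le1 inf_le2 le_diff_eq)
qed (simp add: add_right_mono)

lemma vl_add_sup_right:
  fixes a b c :: "'a::{ordered_real_vector,lattice}"
  shows "sup a b + c = sup (a + c) (b + c)"
proof (intro order.antisym)
  have "a \<le> sup (a + c) (b + c) - c" by (simp add: le_diff_eq)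
  moreover have "b \<le> sup (a + c) (b + c) - c" by (simp add: le_diff_eq)
  ultimately have "sup a b \<le> sup (a + c) (b + c) - c" by simp
  then show "sup a b + c \<le> sup (a + c) (b + c)"
    by (simp add: le_diff_eq)
qed (simp add: add_right_mono)

lemma vl_add_inf_left:
  fixes a b c :: "'a::{ordered_real_vector,lattice}"
  shows "c + inf a b = inf (c + a) (c + b)"
  using vl_add_inf_right[of a b c] by (simp add: add.commute)

lemma vl_add_sup_left:
  fixes a b c :: "'a::{ordered_real_vector,lattice}"
  shows "c + sup a b = sup (c + a) (c + b)"
  using vl_add_sup_right[of a b c] by (simp add: add.commute)

lemma vl_neg_inf:
  fixes a b :: "'a::{ordered_real_vector,lattice}"
  shows "- inf a b = sup (- a) (- b)"
proof (intro order.antisym)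
  show "sup (- a) (- b) \<le> - inf a b"
    by (simp add: le_infI2)
  have "inf a b \<ge> - sup (- a) (- b)"
    by (simp add: minus_le_iff)
  then show "- inf a b \<le> sup (- a) (- b)"
    by (metis minus_le_iff)
qed

lemma vl_neg_sup:
  fixes a b :: "'a::{ordered_real_vector,lattice}"
  shows "- sup a b = inf (- a) (- b)"
  using vl_neg_inf[of "-a" "-b"] by (metis minus_minus)

lemma vl_add_eq_inf_sup:
  fixes a b :: "'a::{ordered_real_vector,lattice}"
  shows "a + b = sup a b + inf a b"
proof -
  have "a + b - inf a b = a + b + sup (- a) (- b)"
    by (simp add: vl_neg_inf)
  also have "\<dots> = sup b a"
    by (simp add: vl_add_sup_left algebra_simps)
  finally show ?thesis by (simp add: sup_commute algebra_simps)
qed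

lemma vl_diff_inf:
  fixes z w :: "'a::{ordered_real_vector,lattice}"
  shows "z - inf z w = sup 0 (z - w)"
proof -
  have "z - inf z w = z + sup (- z) (- w)"
    by (simp add: vl_neg_inf)
  also have "\<dots> = sup 0 (z - w)"
    by (simp add: vl_add_sup_left)
  finally show ?thesis .
qed

lemma vl_diff_inf_le:
  fixes z w U :: "'a::{ordered_real_vector,lattice}"
  assumes "z \<le> U" "w \<le> U"
  shows "z - inf z w \<le> U - w"
  using assms by (simp add: vl_diff_inf)

lemma labs_ge: 
  fixes x :: "'a::{ordered_real_vector,lattice}"
  shows "x \<le> labs x" "- x \<le> labs x"
  by (simp_all add: labs_def)

lemma labs_nonneg:
  fixes x :: "'a::{ordered_real_vector,lattice}"
  shows "0 \<le> labs x"
proof -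
  have "x + (- x) \<le> labs x + labs x"
    by (intro add_mono labs_ge)
  then have "0 \<le> (2::real) *\<^sub>R labs x"
    by (simp add: scaleR_2)
  then have "(1/2::real) *\<^sub>R 0 \<le> (1/2::real) *\<^sub>R ((2::real) *\<^sub>R labs x)"
    by (intro scaleR_left_mono) auto
  then show ?thesis by simp
qed

lemma labs_pos:
  fixes x :: "'a::{ordered_real_vector,lattice}"
  assumes "0 \<le> x" shows "labs x = x"
proof -
  have "- x \<le> x" using assms by (meson neg_le_0_iff_le order_trans)
  then show ?thesis by (simp add: labs_def sup_absorb1)
qed

lemma labs_labs:
  fixes x :: "'a::{ordered_real_vector,lattice}"
  shows "labs (labs x) = labs x"
  by (simp add: labs_pos labs_nonneg)

lemma labs_minus:
  fixes x :: "'a::{ordered_real_vector,lattice}"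
  shows "labs (- x) = labs x"
  by (simp add: labs_def sup_commute)

lemma labs_zero_iff:
  fixes x :: "'a::{ordered_real_vector,lattice}"
  shows "labs x = 0 \<longleftrightarrow> x = 0"
proof
  assume "labs x = 0"
  then have "x \<le> 0" "- x \<le> 0" using labs_ge[of x] by auto
  then show "x = 0" by (metis neg_le_0_iff_le order.antisym)
qed (simp add: labs_def)

lemma labs_0 [simp]: "labs (0::'a::{ordered_real_vector,lattice}) = 0"
  by (simp add: labs_def)

lemma labs_diff_commute:
  fixes x y :: "'a::{ordered_real_vector,lattice}"
  shows "labs (x - y) = labs (y - x)"
  by (metis labs_minus minus_diff_eq)

lemma disj_add_eq_sup:
  fixes a c :: "'a::{ordered_real_vector,lattice}"
  assumes "inf a c = 0"
  shows "a + c = sup a c"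
  using vl_add_eq_inf_sup[of a c] assms by simp

lemma inf_add_le:
  fixes a b c :: "'a::{ordered_real_vector,lattice}"
  assumes "0 \<le> a" "0 \<le> b" "0 \<le> c"
  shows "inf (a + b) c \<le> inf a c + inf b c"
proof -
  have "inf a c + inf b c = inf (a + inf b c) (c + inf b c)"
    by (simp add: vl_add_inf_right)
  also have "\<dots> = inf (inf (a + b) (a + c)) (inf (c + b) (c + c))"
    by (simp add: vl_add_inf_left)
  finally have eq: "inf a c + inf b c = inf (inf (a + b) (a + c)) (inf (c + b) (c + c))" .
  have "inf (a + b) c \<le> inf (inf (a + b) (a + c)) (inf (c + b) (c + c))"
    using assms
    by (auto intro!: le_infI simp: le_infI1 le_infI2 add_increasing add_increasing2)
  then show ?thesis using eq by simp
qed

lemma arch_zero: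
  fixes x y :: "'a::{ordered_real_vector,lattice}"
  assumes "archimedean_vl TYPE('a)" "0 \<le> x" "\<And>n. real n *\<^sub>R x \<le> y"
  shows "x = 0"
  using assms unfolding archimedean_vl_def by blast

lemma scaleR_Suc_nat:
  fixes x :: "'a::real_vector"
  shows "real (Suc k) *\<^sub>R x = real k *\<^sub>R x + x"
  by (simp add: scaleR_left_distrib)

lemma scaleR_nat_nonneg:
  fixes x :: "'a::ordered_real_vector"
  assumes "0 \<le> x" shows "0 \<le> real k *\<^sub>R x"
  using assms by (simp add: scaleR_nonneg_nonneg)



section \<open>Topology\<close>

lemma lt_topspace: "linear_topology \<tau> \<Longrightarrow> topspace \<tau> = UNIV"
  by (simp add: linear_topology_def)

lemma lt_open_UNIV: "linear_topology \<tau> \<Longrightarrow> openin \<tau> UNIV"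
  by (metis lt_topspace openin_topspace)

lemma lt_cont_add:
  assumes "linear_topology \<tau>"
  shows "continuous_map \<tau> \<tau> (\<lambda>x. x + c)"
proof -
  have "continuous_map \<tau> (prod_topology \<tau> \<tau>) (\<lambda>x. (x, c))"
    using assms by (intro continuous_map_pairedI) (auto simp: lt_topspace)
  moreover have "continuous_map (prod_topology \<tau> \<tau>) \<tau> (\<lambda>(x, y). x + y)"
    using assms by (simp add: linear_topology_def)
  ultimately show ?thesis
    using continuous_map_compose[of \<tau> "prod_topology \<tau> \<tau>" "\<lambda>x. (x, c)" \<tau> "\<lambda>(x, y). x + y"]
    by (simp add: o_def)
qed

lemma lt_cont_scale:
  assumes "linear_topology \<tau>"
  shows "continuous_map \<tau> \<tau> (\<lambda>x. r *\<^sub>R x)"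
proof -
  have "continuous_map \<tau> (prod_topology euclideanreal \<tau>) (\<lambda>x. (r, x))"
    using assms by (intro continuous_map_pairedI) auto
  moreover have "continuous_map (prod_topology euclideanreal \<tau>) \<tau> (\<lambda>(c, x). c *\<^sub>R x)"
    using assms by (simp add: linear_topology_def)
  ultimately show ?thesis
    using continuous_map_compose[of \<tau> "prod_topology euclideanreal \<tau>" "\<lambda>x. (r, x)" \<tau> "\<lambda>(c, x). c *\<^sub>R x"]
    by (simp add: o_def)
qed

lemma lt_cont_minus_left:
  assumes "linear_topology \<tau>"
  shows "continuous_map \<tau> \<tau> (\<lambda>x. c - x)"
proof -
  have "continuous_map \<tau> \<tau> ((\<lambda>x. x + c) \<circ> (\<lambda>x. (-1) *\<^sub>R x))"
    using continuous_map_compose[OF lt_cont_scale[OF assms] lt_cont_add[OF assms]] .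
  then show ?thesis by (simp add: o_def)
qed

lemma lt_open_preimage:
  assumes "linear_topology \<tau>" "continuous_map \<tau> \<tau> g" "openin \<tau> U"
  shows "openin \<tau> {x. g x \<in> U}"
proof -
  have "openin \<tau> {x \<in> topspace \<tau>. g x \<in> U}"
    using assms(2,3) openin_continuous_map_preimage by blast
  then show ?thesis using assms(1) by (simp add: lt_topspace)
qed

lemma nhd0_UNIV: "linear_topology \<tau> \<Longrightarrow> nhd0 \<tau> UNIV"
  unfolding nhd0_def using lt_open_UNIV by blast

lemma nhd0_zero: "nhd0 \<tau> V \<Longrightarrow> 0 \<in> V"
  unfolding nhd0_def by blast

lemma nhd0_Int:
  assumes "nhd0 \<tau> U" "nhd0 \<tau> V" shows "nhd0 \<tau> (U \<inter> V)"
proof -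
  obtain A where A: "openin \<tau> A" "0 \<in> A" "A \<subseteq> U" using assms(1) unfolding nhd0_def by blast
  obtain B where B: "openin \<tau> B" "0 \<in> B" "B \<subseteq> V" using assms(2) unfolding nhd0_def by blast
  have "openin \<tau> (A \<inter> B)" using A(1) B(1) by (rule openin_Int)
  moreover have "0 \<in> A \<inter> B" using A(2) B(2) by simp
  moreover have "A \<inter> B \<subseteq> U \<inter> V" using A(3) B(3) by auto
  ultimately show ?thesis unfolding nhd0_def by blast
qed

lemma nhd0_mono: "nhd0 \<tau> U \<Longrightarrow> U \<subseteq> V \<Longrightarrow> nhd0 \<tau> V"
  unfolding nhd0_def by blast

lemma nhd0_INT_finite:
  assumes "linear_topology \<tau>" "finite K" "\<And>k. k \<in> K \<Longrightarrow> nhd0 \<tau> (V k)"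
  shows "nhd0 \<tau> (\<Inter>k\<in>K. V k)"
  using assms(2,3)
proof (induction K rule: finite_induct)
  case empty then show ?case using nhd0_UNIV[OF assms(1)] by simp
next
  case (insert x F) then show ?case by (simp add: nhd0_Int)
qed

lemma lt_half:
  assumes "linear_topology \<tau>" "nhd0 \<tau> U"
  shows "\<exists>W. nhd0 \<tau> W \<and> (\<forall>a\<in>W. \<forall>b\<in>W. a + b \<in> U)"
proof -
  obtain U0 where U0: "openin \<tau> U0" "0 \<in> U0" "U0 \<subseteq> U" using assms(2) unfolding nhd0_def by blast
  have "continuous_map (prod_topology \<tau> \<tau>) \<tau> (\<lambda>(x, y). x + y)"
    using assms by (simp add: linear_topology_def)
  then have "openin (prod_topology \<tau> \<tau>) {z \<in> topspace (prod_topology \<tau> \<tau>). (\<lambda>(x, y). x + y) z \<in> U0}"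
    using U0(1) openin_continuous_map_preimage by blast
  moreover have "(0, 0) \<in> {z \<in> topspace (prod_topology \<tau> \<tau>). (\<lambda>(x, y). x + y) z \<in> U0}"
    using U0(2) assms(1) by (simp add: lt_topspace)
  ultimately have "\<exists>A B. openin \<tau> A \<and> openin \<tau> B \<and> 0 \<in> A \<and> 0 \<in> B \<and>
     A \<times> B \<subseteq> {z \<in> topspace (prod_topology \<tau> \<tau>). (\<lambda>(x, y). x + y) z \<in> U0}"
    unfolding openin_prod_topology_alt by (elim allE impE) assumption
  then obtain A B where AB: "openin \<tau> A" "openin \<tau> B" "0 \<in> A" "0 \<in> B"
     "A \<times> B \<subseteq> {z \<in> topspace (prod_topology \<tau> \<tau>). (\<lambda>(x, y). x + y) z \<in> U0}"
    by blast
  have "openin \<tau> (A \<inter> B)" using AB(1,2) by (rule openin_Int)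
  then have "nhd0 \<tau> (A \<inter> B)" unfolding nhd0_def using AB(3,4) by blast
  moreover have "\<forall>a\<in>A \<inter> B. \<forall>b\<in>A \<inter> B. a + b \<in> U"
  proof (intro ballI)
    fix a b assume "a \<in> A \<inter> B" "b \<in> A \<inter> B"
    then have "(a, b) \<in> A \<times> B" by simp
    then have "(a, b) \<in> {z \<in> topspace (prod_topology \<tau> \<tau>). (\<lambda>(x, y). x + y) z \<in> U0}"
      using AB(5) by blast
    then show "a + b \<in> U" using U0(3) by auto
  qed
  ultimately show ?thesis by blast
qed

lemma lt_separate:
  assumes "linear_topology \<tau>" "x \<noteq> 0"
  shows "\<exists>U. nhd0 \<tau> U \<and> x \<notin> U"
proof -
  have "Hausdorff_space \<tau>" using assms(1) by (simp add: linear_topology_def)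
  moreover have "0 \<in> topspace \<tau>" "x \<in> topspace \<tau>" using assms(1) by (auto simp: lt_topspace)
  ultimately obtain U V where "openin \<tau> U" "openin \<tau> V" "0 \<in> U" "x \<in> V" "disjnt U V"
    using assms(2) unfolding Hausdorff_space_def by blast
  then show ?thesis unfolding nhd0_def disjnt_def by blast
qed

lemma top_conv_nhd0:
  assumes "linear_topology \<tau>" "top_conv \<tau> F f x" "nhd0 \<tau> U"
  shows "eventually (\<lambda>i. f i - x \<in> U) F"
proof -
  obtain U0 where U0: "openin \<tau> U0" "0 \<in> U0" "U0 \<subseteq> U" using assms(3) unfolding nhd0_def by blast
  have "openin \<tau> {y. y + (- x) \<in> U0}"
    using lt_open_preimage[OF assms(1) lt_cont_add[OF assms(1)] U0(1)] by blast
  moreover have "x \<in> {y. y + (- x) \<in> U0}" using U0(2) by simp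
  ultimately have "eventually (\<lambda>i. f i \<in> {y. y + (- x) \<in> U0}) F"
    using assms(2) unfolding top_conv_def by blast
  then show ?thesis by eventually_elim (use U0(3) in auto)
qed



section \<open>Solid sets, disjoint complements, normal sequences\<close>

lemma solid_mem:
  fixes S :: "'a::{ordered_real_vector,lattice} set"
  shows "solid S \<Longrightarrow> x \<in> S \<Longrightarrow> labs y \<le> labs x \<Longrightarrow> y \<in> S"
  unfolding solid_def by blast

lemma solid_labs:
  fixes S :: "'a::{ordered_real_vector,lattice} set"
  shows "solid S \<Longrightarrow> x \<in> S \<Longrightarrow> labs x \<in> S"
  by (rule solid_mem[of S x]) (auto simp: labs_labs)

lemma solid_INT:
  fixes V :: "'b \<Rightarrow> 'a::{ordered_real_vector,lattice} set"
  shows "(\<And>i. i \<in> K \<Longrightarrow> solid (V i)) \<Longrightarrow> solid (\<Inter>i\<in>K. V i)"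
  unfolding solid_def by blast

lemma solid_UNIV: "solid (UNIV::'a::{ordered_real_vector,lattice} set)"
  unfolding solid_def by blast

lemma inf_labs_nonneg:
  fixes x y :: "'a::{ordered_real_vector,lattice}"
  shows "0 \<le> inf (labs x) (labs y)"
  by (simp add: labs_nonneg)

lemma dc_anti:
  fixes N M :: "'a::{ordered_real_vector,lattice} set"
  shows "N \<subseteq> M \<Longrightarrow> disj_compl M \<subseteq> disj_compl N"
  unfolding disj_compl_def by blast

lemma dc_solid:
  fixes x y :: "'a::{ordered_real_vector,lattice}"
  assumes "x \<in> disj_compl N" "labs y \<le> labs x"
  shows "y \<in> disj_compl N"
  unfolding disj_compl_def
proof (intro CollectI ballI)
  fix n assume "n \<in> N"
  then have "inf (labs x) (labs n) = 0" using assms(1) unfolding disj_compl_def by blast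
  moreover have "inf (labs y) (labs n) \<le> inf (labs x) (labs n)"
    using assms(2) by (simp add: le_infI1)
  ultimately show "inf (labs y) (labs n) = 0"
    using inf_labs_nonneg[of y n] by (simp add: order.antisym)
qed

lemma dc_labs:
  fixes x :: "'a::{ordered_real_vector,lattice}"
  shows "labs x \<in> disj_compl N \<longleftrightarrow> x \<in> disj_compl N"
  unfolding disj_compl_def by (simp add: labs_labs)

lemma dc_add:
  fixes a b :: "'a::{ordered_real_vector,lattice}"
  assumes "0 \<le> a" "0 \<le> b" "a \<in> disj_compl N" "b \<in> disj_compl N"
  shows "a + b \<in> disj_compl N"
  unfolding disj_compl_def
proof (intro CollectI ballI)
  fix n assume n: "n \<in> N"
  have a0: "inf a (labs n) = 0" using assms(1,3) n unfolding disj_compl_def by (simp add: labs_pos)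
  have b0: "inf b (labs n) = 0" using assms(2,4) n unfolding disj_compl_def by (simp add: labs_pos)
  have "inf (a + b) (labs n) \<le> inf a (labs n) + inf b (labs n)"
    using assms(1,2) by (intro inf_add_le labs_nonneg)
  then have "inf (a + b) (labs n) \<le> 0" using a0 b0 by simp
  moreover have "0 \<le> inf (a + b) (labs n)" using assms(1,2) by (simp add: labs_nonneg add_nonneg_nonneg)
  moreover have "labs (a + b) = a + b" using assms(1,2) by (simp add: labs_pos add_nonneg_nonneg)
  ultimately show "inf (labs (a + b)) (labs n) = 0" by (simp add: order.antisym)
qed

lemma dc_scale_nat:
  fixes a :: "'a::{ordered_real_vector,lattice}"
  assumes "0 \<le> a" "a \<in> disj_compl N"
  shows "real k *\<^sub>R a \<in> disj_compl N"
proof (induction k)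
  case 0
  then show ?case unfolding disj_compl_def by (simp add: labs_nonneg inf_absorb1)
next
  case (Suc k)
  then show ?case
    unfolding scaleR_Suc_nat using assms by (intro dc_add scaleR_nat_nonneg) auto
qed

definition NS :: "'a::{ordered_real_vector,lattice} topology \<Rightarrow> (nat \<Rightarrow> 'a set) \<Rightarrow> bool" where
  "NS \<tau> V \<longleftrightarrow> normal_seq \<tau> V \<and> (\<forall>n. solid (V n))"

lemma ns_nhd0: "normal_seq \<tau> V \<Longrightarrow> nhd0 \<tau> (V n)"
  unfolding normal_seq_def by blast

lemma ns_zero: "normal_seq \<tau> V \<Longrightarrow> 0 \<in> V n"
  using ns_nhd0 nhd0_zero by blast

lemma ns_step:
  assumes "normal_seq \<tau> V" "a \<in> V (Suc n)" "b \<in> V (Suc n)" shows "a + b \<in> V n"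
proof -
  have sub: "{a + b |a b. a \<in> V (Suc n) \<and> b \<in> V (Suc n)} \<subseteq> V n"
    using assms(1) unfolding normal_seq_def by (rule allE) (erule conjE)
  have "a + b \<in> {a + b |a b. a \<in> V (Suc n) \<and> b \<in> V (Suc n)}"
    using assms(2,3) by blast
  then show ?thesis using sub by (rule rev_subsetD)
qed

lemma ns_Suc_sub: "normal_seq \<tau> V \<Longrightarrow> V (Suc n) \<subseteq> V n"
proof
  fix x assume N: "normal_seq \<tau> V" and x: "x \<in> V (Suc n)"
  have "x + 0 \<in> V n" using ns_step[OF N x ns_zero[OF N]] .
  then show "x \<in> V n" by simp
qed

lemma ns_antimono: "normal_seq \<tau> V \<Longrightarrow> m \<le> n \<Longrightarrow> V n \<subseteq> V m"
  by (rule lift_Suc_antimono_le[of V]) (auto dest: ns_Suc_sub)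

lemma ns_sum:
  fixes a :: "nat \<Rightarrow> 'a::{ordered_real_vector,lattice}"
  assumes "normal_seq \<tau> V" "\<And>k. a k \<in> V k"
  shows "sum a {Suc p..p + d} \<in> V p"
proof (induction d arbitrary: p)
  case 0
  then show ?case using ns_zero[OF assms(1)] by simp
next
  case (Suc d)
  have e1: "sum a {Suc p..p + Suc d} = a (Suc p) + sum a {Suc (Suc p)..p + Suc d}"
    using sum.atLeast_Suc_atMost[of "Suc p" "p + Suc d" a] by simp
  have e2: "p + Suc d = Suc p + d" by simp
  have "sum a {Suc (Suc p)..Suc p + d} \<in> V (Suc p)" by (rule Suc.IH)
  then have "a (Suc p) + sum a {Suc (Suc p)..Suc p + d} \<in> V p"
    by (rule ns_step[OF assms(1) assms(2)])
  then show ?case using e1 e2 by metis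
qed

lemma NN_solid:
  fixes V :: "nat \<Rightarrow> 'a::{ordered_real_vector,lattice} set"
  shows "NS \<tau> V \<Longrightarrow> solid (\<Inter>n. V n)"
  unfolding NS_def by (intro solid_INT) auto

lemma NN_add:
  assumes "normal_seq \<tau> V" "a \<in> (\<Inter>n. V n)" "b \<in> (\<Inter>n. V n)" shows "a + b \<in> (\<Inter>n. V n)"
proof (rule InterI, clarify)
  fix n
  have "a \<in> V (Suc n)" "b \<in> V (Suc n)" using assms(2,3) by auto
  then show "a + b \<in> V n" by (rule ns_step[OF assms(1)])
qed

lemma NN_zero: "normal_seq \<tau> V \<Longrightarrow> 0 \<in> (\<Inter>n. V n)"
  using ns_zero by blast

lemma NN_scale_nat:
  fixes a :: "'a::{ordered_real_vector,lattice}"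
  assumes "normal_seq \<tau> V" "a \<in> (\<Inter>n. V n)"
  shows "real k *\<^sub>R a \<in> (\<Inter>n. V n)"
proof (induction k)
  case 0 then show ?case using NN_zero[OF assms(1)] by simp
next
  case (Suc k) then show ?case unfolding scaleR_Suc_nat using NN_add[OF assms(1) _ assms(2)] by blast
qed

lemma ns_exists:
  fixes \<tau> :: "'a::{ordered_real_vector,lattice} topology"
  assumes "locally_solid \<tau>" "nhd0 \<tau> U"
  shows "\<exists>V. NS \<tau> V \<and> V 0 \<subseteq> U"
proof -
  have lt: "linear_topology \<tau>" using assms(1) by (simp add: locally_solid_def)
  have sol: "\<exists>W. nhd0 \<tau> W \<and> solid W \<and> W \<subseteq> X" if "nhd0 \<tau> X" for X
    using assms(1) that unfolding locally_solid_def by blast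
  have half: "\<exists>W. nhd0 \<tau> W \<and> solid W \<and> (\<forall>a\<in>W. \<forall>b\<in>W. a + b \<in> X)" if X: "nhd0 \<tau> X" for X
  proof -
    obtain W1 where W1: "nhd0 \<tau> W1" "\<forall>a\<in>W1. \<forall>b\<in>W1. a + b \<in> X" using lt_half[OF lt X] by blast
    obtain W where "nhd0 \<tau> W" "solid W" "W \<subseteq> W1" using sol[OF W1(1)] by blast
    then show ?thesis using W1(2) by blast
  qed
  define g where "g X = (SOME W. nhd0 \<tau> W \<and> solid W \<and> (\<forall>a\<in>W. \<forall>b\<in>W. a + b \<in> X))" for X
  have g: "nhd0 \<tau> (g X) \<and> solid (g X) \<and> (\<forall>a\<in>g X. \<forall>b\<in>g X. a + b \<in> X)" if "nhd0 \<tau> X" for X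
    unfolding g_def using someI_ex[OF half[OF that]] .
  obtain V0 where V0: "nhd0 \<tau> V0" "solid V0" "V0 \<subseteq> U" using sol[OF assms(2)] by blast
  define V where "V = rec_nat V0 (\<lambda>_ W. g W)"
  have V0': "V 0 = V0" and VS: "V (Suc n) = g (V n)" for n by (simp_all add: V_def)
  have P: "nhd0 \<tau> (V n) \<and> solid (V n)" for n
  proof (induction n)
    case 0 then show ?case using V0 V0' by simp
  next
    case (Suc n) then show ?case using g[of "V n"] VS by simp
  qed
  have "normal_seq \<tau> V"
    unfolding normal_seq_def
  proof (intro allI conjI)
    fix n show "nhd0 \<tau> (V n)" using P by blast
    show "{a + b |a b. a \<in> V (Suc n) \<and> b \<in> V (Suc n)} \<subseteq> V n"
      using g[of "V n"] P[of n] VS[of n] by auto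
  qed
  then show ?thesis using P V0' V0(3) unfolding NS_def by blast
qed

lemma ns_diag:
  fixes \<tau> :: "'a::{ordered_real_vector,lattice} topology"
  assumes lt: "linear_topology \<tau>" and V: "\<And>i. NS \<tau> (V i)"
  defines "W \<equiv> (\<lambda>j. \<Inter>i\<in>{..<j}. V i j)"
  shows "NS \<tau> W" "\<And>i. (\<Inter>j. W j) \<subseteq> (\<Inter>j. V i j)"
proof -
  have nv: "normal_seq \<tau> (V i)" for i using V unfolding NS_def by blast
  have "normal_seq \<tau> W"
    unfolding normal_seq_def
  proof (intro allI conjI)
    fix n
    show "nhd0 \<tau> (W n)" unfolding W_def
      by (intro nhd0_INT_finite[OF lt]) (auto intro: ns_nhd0[OF nv])
    show "{a + b |a b. a \<in> W (Suc n) \<and> b \<in> W (Suc n)} \<subseteq> W n"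
    proof clarify
      fix a b assume "a \<in> W (Suc n)" "b \<in> W (Suc n)"
      then have "\<forall>i<Suc n. a \<in> V i (Suc n) \<and> b \<in> V i (Suc n)" unfolding W_def by auto
      then show "a + b \<in> W n" unfolding W_def using ns_step[OF nv] by auto
    qed
  qed
  moreover have "solid (W n)" for n
    unfolding W_def using V unfolding NS_def by (intro solid_INT) auto
  ultimately show "NS \<tau> W" unfolding NS_def by blast
  fix i
  show "(\<Inter>j. W j) \<subseteq> (\<Inter>j. V i j)"
  proof clarify
    fix x j assume x: "x \<in> (\<Inter>j. W j)"
    then have "x \<in> W (Suc (i + j))" by blast
    then have "x \<in> V i (Suc (i + j))" unfolding W_def by auto
    then show "x \<in> V i j" using ns_antimono[OF nv, of j "Suc (i + j)" i] by auto
  qed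
qed



section \<open>Directed suprema and uo-Lebesgue topologies\<close>

lemma uo_top:
  fixes \<tau> :: "'a::{ordered_real_vector,lattice} topology"
  assumes "uo_Lebesgue \<tau>" "uo_conv F g x"
  shows "top_conv \<tau> F g x"
proof -
  have "uo_conv (filtermap g F) id x"
    using assms(2) unfolding uo_conv_def order_conv_def by (simp add: eventually_filtermap)
  then have "top_conv \<tau> (filtermap g F) id x"
    using assms(1) unfolding uo_Lebesgue_def by blast
  then show ?thesis unfolding top_conv_def by (simp add: eventually_filtermap)
qed

lemma dir_sup_approx:
  fixes \<tau> :: "'a::{ordered_real_vector,lattice} topology"
  assumes uo: "uo_Lebesgue \<tau>" and Sne: "S \<noteq> {}"
    and Sdir: "\<And>a b. a \<in> S \<Longrightarrow> b \<in> S \<Longrightarrow> \<exists>c\<in>S. a \<le> c \<and> b \<le> c"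
    and sup: "is_sup_of S t" and U: "nhd0 \<tau> U"
  shows "\<exists>y\<in>S. t - y \<in> U"
proof -
  have lt: "linear_topology \<tau>" using uo unfolding uo_Lebesgue_def locally_solid_def by blast
  define F where "F = (INF s\<in>S. principal {y\<in>S. s \<le> y})"
  have evF: "eventually P F \<longleftrightarrow> (\<exists>s\<in>S. \<forall>y\<in>S. s \<le> y \<longrightarrow> P y)" for P
  proof -
    have "eventually P F \<longleftrightarrow> (\<exists>s\<in>S. eventually P (principal {y\<in>S. s \<le> y}))"
      unfolding F_def
    proof (rule eventually_INF_base[OF Sne])
      fix a b assume "a \<in> S" "b \<in> S"
      then obtain c where c: "c \<in> S" "a \<le> c" "b \<le> c" using Sdir by blast
      have "{y\<in>S. c \<le> y} \<subseteq> {y\<in>S. a \<le> y} \<inter> {y\<in>S. b \<le> y}" using c by auto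
      then have "principal {y\<in>S. c \<le> y} \<le> inf (principal {y\<in>S. a \<le> y}) (principal {y\<in>S. b \<le> y})"
        by (simp add: inf_principal)
      then show "\<exists>x\<in>S. principal {y\<in>S. x \<le> y} \<le> inf (principal {y\<in>S. a \<le> y}) (principal {y\<in>S. b \<le> y})"
        using c(1) by blast
    qed
    then show ?thesis by (auto simp add: eventually_principal)
  qed
  have ub: "\<And>s. s \<in> S \<Longrightarrow> s \<le> t" using sup unfolding is_sup_of_def by blast
  have lub: "\<And>u. (\<And>s. s \<in> S \<Longrightarrow> s \<le> u) \<Longrightarrow> t \<le> u" using sup unfolding is_sup_of_def by blast
  have "uo_conv F id t"
    unfolding uo_conv_def order_conv_def
  proof (intro allI exI conjI)
    fix z :: 'a
    let ?D = "(\<lambda>s. t - s) ` S"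
    show "?D \<noteq> {}" using Sne by blast
    show "\<forall>a\<in>?D. \<forall>b\<in>?D. \<exists>c\<in>?D. c \<le> a \<and> c \<le> b"
    proof clarify
      fix a b assume "a \<in> S" "b \<in> S"
      then obtain c where c: "c \<in> S" "a \<le> c" "b \<le> c" using Sdir by blast
      then have "t - c \<le> t - a" "t - c \<le> t - b" by simp_all
      then show "\<exists>c\<in>?D. c \<le> t - a \<and> c \<le> t - b" using c(1) by blast
    qed
    show "is_inf_of ?D 0"
      unfolding is_inf_of_def
    proof (intro conjI allI impI ballI)
      fix d assume "d \<in> ?D" then show "0 \<le> d" using ub by auto
    next
      fix w assume w: "\<forall>d\<in>?D. w \<le> d"
      have "s \<le> t - w" if "s \<in> S" for s
      proof -
        have "w \<le> t - s" using w that by blast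
        then show ?thesis by (simp add: le_diff_eq algebra_simps)
      qed
      then have "t \<le> t - w" by (rule lub)
      then show "w \<le> 0" by (simp add: le_diff_eq)
    qed
    show "\<forall>d\<in>?D. eventually (\<lambda>i. labs (inf (labs (id i - t)) (labs z) - 0) \<le> d) F"
    proof clarify
      fix s assume s: "s \<in> S"
      have "\<forall>y\<in>S. s \<le> y \<longrightarrow> labs (inf (labs (id y - t)) (labs z) - 0) \<le> t - s"
      proof clarify
        fix y assume y: "y \<in> S" "s \<le> y"
        have "labs (inf (labs (y - t)) (labs z) - 0) = inf (labs (y - t)) (labs z)"
          by (simp add: labs_pos labs_nonneg)
        also have "\<dots> \<le> labs (y - t)" by simp
        also have "labs (y - t) = t - y"
          using ub[OF y(1)] by (simp add: labs_diff_commute labs_pos)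
        also have "\<dots> \<le> t - s" using y(2) by simp
        finally show "labs (inf (labs (id y - t)) (labs z) - 0) \<le> t - s" by simp
      qed
      then show "eventually (\<lambda>i. labs (inf (labs (id i - t)) (labs z) - 0) \<le> t - s) F"
        unfolding evF using s by blast
    qed
  qed
  then have tc: "top_conv \<tau> F id t" by (rule uo_top[OF uo])
  obtain U0 where U0: "openin \<tau> U0" "0 \<in> U0" "U0 \<subseteq> U" using U unfolding nhd0_def by blast
  have "openin \<tau> {x. t - x \<in> U0}"
    by (rule lt_open_preimage[OF lt lt_cont_minus_left[OF lt] U0(1)])
  moreover have "t \<in> {x. t - x \<in> U0}" using U0(2) by simp
  ultimately have "eventually (\<lambda>i. id i \<in> {x. t - x \<in> U0}) F"
    using tc unfolding top_conv_def by blast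
  then obtain s where "s \<in> S" "\<forall>y\<in>S. s \<le> y \<longrightarrow> t - y \<in> U0" unfolding evF by auto
  then have "s \<in> S" "t - s \<in> U" using U0(3) by auto
  then show ?thesis by blast
qed



section \<open>Sequences along normal sequences are uo-null\<close>

lemma key_w:
  fixes \<tau> :: "'a::{ordered_real_vector,lattice} topology" and y z :: "nat \<Rightarrow> 'a"
  assumes arch: "archimedean_vl TYPE('a)" and uo: "uo_Lebesgue \<tau>" and V: "NS \<tau> V"
    and yV: "\<And>n. y n \<in> V n" and ydc: "\<And>n. y n \<in> disj_compl (\<Inter>j. V j)"
    and z_def: "\<And>k. z k = inf (labs (y k)) u" and u0: "0 \<le> u"
    and w0: "0 \<le> w" and wD: "\<And>d. (\<exists>n. \<forall>k\<ge>n. z k \<le> d) \<Longrightarrow> w \<le> d"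
  shows "w = 0"
proof -
  have nv: "normal_seq \<tau> V" and sV: "\<And>n. solid (V n)" using V unfolding NS_def by auto
  have z0: "0 \<le> z k" for k unfolding z_def using u0 by (simp add: labs_nonneg)
  have zu: "z k \<le> u" for k unfolding z_def by simp
  have zy: "z k \<le> labs (y k)" for k unfolding z_def by simp
  have zV: "z k \<in> V k" for k
    by (rule solid_mem[OF sV yV]) (simp add: labs_pos z0 zy)
  have wu: "w \<le> u" using wD zu by blast
  have wV: "w \<in> V j" for j
  proof -
    define g where "g m = inf w (sum z {Suc (Suc j)..Suc j + m})" for m
    have sumV: "sum z {Suc (Suc j)..Suc j + m} \<in> V (Suc j)" for m
      by (rule ns_sum[OF nv zV])
    have sum0: "0 \<le> sum z A" for A by (simp add: sum_nonneg z0)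
    have g0: "0 \<le> g m" for m unfolding g_def by (intro le_infI w0 sum0)
    have gV: "g m \<in> V (Suc j)" for m
    proof (rule solid_mem[OF sV sumV[of m]])
      have "labs (g m) = g m" by (rule labs_pos[OF g0])
      also have "\<dots> \<le> sum z {Suc (Suc j)..Suc j + m}" unfolding g_def by (rule inf_le2)
      also have "\<dots> = labs (sum z {Suc (Suc j)..Suc j + m})" by (rule labs_pos[OF sum0, symmetric])
      finally show "labs (g m) \<le> labs (sum z {Suc (Suc j)..Suc j + m})" .
    qed
    have gmono: "g m \<le> g m'" if "m \<le> m'" for m m'
    proof -
      have "sum z {Suc (Suc j)..Suc j + m} \<le> sum z {Suc (Suc j)..Suc j + m'}"
        by (rule sum_mono2) (use that z0 in auto)
      then show ?thesis unfolding g_def by (simp add: le_infI2)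
    qed
    have Sne: "range g \<noteq> {}" by simp
    have Sdir: "\<exists>c\<in>range g. a \<le> c \<and> b \<le> c" if ab: "a \<in> range g" "b \<in> range g" for a b
    proof -
      obtain m1 m2 where "a = g m1" "b = g m2" using ab by blast
      then have "a \<le> g (max m1 m2)" "b \<le> g (max m1 m2)" using gmono by auto
      then show ?thesis by blast
    qed
    have sup: "is_sup_of (range g) w"
      unfolding is_sup_of_def
    proof (intro conjI allI impI ballI)
      fix x assume "x \<in> range g" then show "x \<le> w" unfolding g_def by auto
    next
      fix v assume v: "\<forall>x\<in>range g. x \<le> v"
      define v' where "v' = inf v w"
      define t where "t = w - v'"
      have gv': "g m \<le> v'" for m unfolding v'_def using v by (simp add: g_def)
      have t0: "0 \<le> t" unfolding t_def v'_def by simp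
      have claim: "\<forall>k\<ge>Suc (Suc j). z k \<le> u - real i *\<^sub>R t" for i
      proof (induction i)
        case 0 then show ?case using zu by simp
      next
        case (Suc i)
        have Ui: "w \<le> u - real i *\<^sub>R t" using wD Suc.IH by blast
        show ?case
        proof (intro allI impI)
          fix k assume k: "Suc (Suc j) \<le> k"
          define m where "m = k - Suc j"
          have km: "Suc j + m = k" using k unfolding m_def by simp
          have "sum z {k} \<le> sum z {Suc (Suc j)..k}"
            by (rule sum_mono2) (use k z0 in auto)
          then have "z k \<le> sum z {Suc (Suc j)..k}" by simp
          then have "inf (z k) w \<le> g m" unfolding g_def km
            by (meson inf_le1 inf_le2 le_infI order_trans)
          then have i1: "inf (z k) w \<le> v'" using gv' order_trans by blast
          have i2: "z k - inf (z k) w \<le> (u - real i *\<^sub>R t) - w"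
            by (rule vl_diff_inf_le) (use Suc.IH k Ui in auto)
          have "z k = inf (z k) w + (z k - inf (z k) w)" by simp
          also have "\<dots> \<le> v' + ((u - real i *\<^sub>R t) - w)" using i1 i2 by (rule add_mono)
          also have "\<dots> = u - real (Suc i) *\<^sub>R t" unfolding t_def scaleR_Suc_nat by (simp add: algebra_simps)
          finally show "z k \<le> u - real (Suc i) *\<^sub>R t" .
        qed
      qed
      have "real i *\<^sub>R t \<le> u - w" for i
      proof -
        have "w \<le> u - real i *\<^sub>R t" using wD claim by blast
        then show ?thesis by (simp add: algebra_simps le_diff_eq)
      qed
      then have "t = 0" using arch_zero[OF arch t0] by blast
      then have "w = v'" unfolding t_def by simp
      then show "w \<le> v" unfolding v'_def by (metis inf_le1)
    qed
    have "nhd0 \<tau> (V (Suc j))" by (rule ns_nhd0[OF nv])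
    then obtain x where x: "x \<in> range g" "w - x \<in> V (Suc j)"
      using dir_sup_approx[OF uo Sne Sdir sup] by blast
    have "x \<in> V (Suc j)" using x(1) gV by blast
    then have "(w - x) + x \<in> V j" by (rule ns_step[OF nv x(2)])
    then show ?thesis by simp
  qed
  then have wN: "w \<in> (\<Inter>j. V j)" by blast
  have disj: "inf (z k) w = 0" for k
  proof -
    have "inf (labs (y k)) (labs w) = 0" using ydc[of k] wN unfolding disj_compl_def by blast
    then have "inf (labs (y k)) w = 0" using w0 by (simp add: labs_pos)
    moreover have "inf (z k) w \<le> inf (labs (y k)) w" using zy by (simp add: le_infI1)
    moreover have "0 \<le> inf (z k) w" using z0 w0 by simp
    ultimately show ?thesis by (simp add: order.antisym)
  qed
  have claim2: "\<forall>k. z k \<le> u - real i *\<^sub>R w" for i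
  proof (induction i)
    case 0 then show ?case using zu by simp
  next
    case (Suc i)
    have Ui: "w \<le> u - real i *\<^sub>R w" using wD Suc.IH by blast
    show ?case
    proof
      fix k
      have "z k + w = sup (z k) w" by (rule disj_add_eq_sup[OF disj])
      also have "\<dots> \<le> u - real i *\<^sub>R w" using Suc.IH Ui by simp
      finally show "z k \<le> u - real (Suc i) *\<^sub>R w"
        unfolding scaleR_Suc_nat by (simp add: algebra_simps le_diff_eq)
    qed
  qed
  have "real i *\<^sub>R w \<le> u" for i
  proof -
    have "w \<le> u - real i *\<^sub>R w" using wD claim2 by blast
    then have "real i *\<^sub>R w \<le> u - w" by (simp add: algebra_simps le_diff_eq)
    also have "\<dots> \<le> u" using w0 by simp
    finally show ?thesis .
  qed
  then show "w = 0" using arch_zero[OF arch w0] by blast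
qed

lemma seq_uo_null:
  fixes \<tau> :: "'a::{ordered_real_vector,lattice} topology" and y :: "nat \<Rightarrow> 'a"
  assumes arch: "archimedean_vl TYPE('a)" and uo: "uo_Lebesgue \<tau>" and V: "NS \<tau> V"
    and yV: "\<And>n. y n \<in> V n" and ydc: "\<And>n. y n \<in> disj_compl (\<Inter>j. V j)"
  shows "uo_conv sequentially y 0"
  unfolding uo_conv_def order_conv_def
proof (intro allI)
  fix yy :: 'a
  define u where "u = labs yy"
  define z where "z k = inf (labs (y k)) u" for k
  have u0: "0 \<le> u" unfolding u_def by (rule labs_nonneg)
  have z0: "0 \<le> z k" for k unfolding z_def using u0 by (simp add: labs_nonneg)
  have zeq: "labs (inf (labs (y k - 0)) (labs yy) - 0) = z k" for k
    unfolding z_def u_def using z0 by (simp add: labs_pos z_def u_def)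
  define D where "D = {d. \<exists>n. \<forall>k\<ge>n. z k \<le> d}"
  have "u \<in> D" unfolding D_def z_def by auto
  then have "D \<noteq> {}" by blast
  moreover have "\<forall>a\<in>D. \<forall>b\<in>D. \<exists>c\<in>D. c \<le> a \<and> c \<le> b"
  proof (intro ballI)
    fix a b assume "a \<in> D" "b \<in> D"
    then obtain n1 n2 where "\<forall>k\<ge>n1. z k \<le> a" "\<forall>k\<ge>n2. z k \<le> b" unfolding D_def by blast
    then have "\<forall>k\<ge>max n1 n2. z k \<le> inf a b" by simp
    then have "inf a b \<in> D" unfolding D_def by blast
    then show "\<exists>c\<in>D. c \<le> a \<and> c \<le> b" by (intro bexI[of _ "inf a b"]) auto
  qed
  moreover have "is_inf_of D 0"
    unfolding is_inf_of_def
  proof (intro conjI allI impI ballI)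
    fix d assume "d \<in> D"
    then obtain n where "\<forall>k\<ge>n. z k \<le> d" unfolding D_def by blast
    then show "0 \<le> d" using z0[of n] by (meson order_refl order_trans)
  next
    fix w' assume w': "\<forall>d\<in>D. w' \<le> d"
    define w where "w = sup w' 0"
    have w0: "0 \<le> w" unfolding w_def by simp
    have wD: "w \<le> d" if dh: "\<exists>n. \<forall>k\<ge>n. z k \<le> d" for d
    proof -
      have "d \<in> D" using dh unfolding D_def by blast
      then have "w' \<le> d" using w' by blast
      moreover obtain n where "\<forall>k\<ge>n. z k \<le> d" using dh by blast
      then have "0 \<le> d" using z0[of n] by (meson order_refl order_trans)
      ultimately show ?thesis unfolding w_def by simp
    qed
    have "w = 0" by (rule key_w[OF arch uo V yV ydc z_def u0 w0 wD])
    then show "w' \<le> 0" unfolding w_def by (metis sup_ge1)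
  qed
  moreover have "\<forall>d\<in>D. eventually (\<lambda>i. labs (inf (labs (y i - 0)) (labs yy) - 0) \<le> d) sequentially"
  proof
    fix d assume "d \<in> D"
    then obtain n where "\<forall>k\<ge>n. z k \<le> d" unfolding D_def by blast
    then show "eventually (\<lambda>i. labs (inf (labs (y i - 0)) (labs yy) - 0) \<le> d) sequentially"
      unfolding eventually_sequentially zeq by blast
  qed
  ultimately show "\<exists>D. D \<noteq> {} \<and> (\<forall>a\<in>D. \<forall>b\<in>D. \<exists>c\<in>D. c \<le> a \<and> c \<le> b) \<and> is_inf_of D 0 \<and>
      (\<forall>d\<in>D. eventually (\<lambda>i. labs (inf (labs (y i - 0)) (labs yy) - 0) \<le> d) sequentially)"
    by blast
qed



section \<open>Countable sup property implies that the carrier is everything\<close>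

lemma NN_band:
  fixes \<tau> :: "'a::{ordered_real_vector,lattice} topology"
  assumes arch: "archimedean_vl TYPE('a)" and uo: "uo_Lebesgue \<tau>" and V: "NS \<tau> V"
    and t0: "0 \<le> t" and perp: "\<And>b. b \<in> disj_compl (\<Inter>j. V j) \<Longrightarrow> inf t (labs b) = 0"
  shows "t \<in> (\<Inter>j. V j)"
proof -
  define N where "N = (\<Inter>j. V j)"
  have nv: "normal_seq \<tau> V" using V unfolding NS_def by auto
  have sN: "solid N" unfolding N_def by (rule NN_solid[OF V])
  define S where "S = {y. y \<in> N \<and> 0 \<le> y \<and> y \<le> t}"
  have Sne: "S \<noteq> {}" unfolding S_def N_def using NN_zero[OF nv] t0 by blast
  have Sdir: "\<exists>c\<in>S. a \<le> c \<and> b \<le> c" if ab: "a \<in> S" "b \<in> S" for a b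
  proof -
    have a: "a \<in> N" "0 \<le> a" "a \<le> t" and b: "b \<in> N" "0 \<le> b" "b \<le> t" using ab unfolding S_def by auto
    have abN: "a + b \<in> N" unfolding N_def by (rule NN_add[OF nv a(1)[unfolded N_def] b(1)[unfolded N_def]])
    have s0: "0 \<le> sup a b" using a(2) by (simp add: le_supI1)
    have "sup a b \<le> a + b" using a(2) b(2) by (simp add: add_increasing add_increasing2)
    then have "labs (sup a b) \<le> labs (a + b)" using s0 a(2) b(2) by (simp add: labs_pos)
    then have "sup a b \<in> N" by (rule solid_mem[OF sN abN])
    then have "sup a b \<in> S" unfolding S_def using s0 a(3) b(3) by simp
    then show ?thesis by (intro bexI[of _ "sup a b"]) auto
  qed
  have sup: "is_sup_of S t"
    unfolding is_sup_of_def
  proof (intro conjI allI impI ballI)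
    fix x assume "x \<in> S" then show "x \<le> t" unfolding S_def by simp
  next
    fix v assume v: "\<forall>x\<in>S. x \<le> v"
    define v' where "v' = inf v t"
    define r where "r = t - v'"
    have "0 \<in> S" unfolding S_def N_def using NN_zero[OF nv] t0 by blast
    then have v0: "0 \<le> v" using v by blast
    have r0: "0 \<le> r" and rt: "r \<le> t" unfolding r_def v'_def using t0 v0 by simp_all
    have rdc: "r \<in> disj_compl N"
      unfolding disj_compl_def
    proof (intro CollectI ballI)
      fix n assume n: "n \<in> N"
      define c where "c = inf r (labs n)"
      have c0: "0 \<le> c" unfolding c_def using r0 by (simp add: labs_nonneg)
      have "labs c = c" by (rule labs_pos[OF c0])
      also have "\<dots> \<le> labs n" unfolding c_def by simp
      finally have cN: "c \<in> N" by (rule solid_mem[OF sN n])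
      have "real k *\<^sub>R c \<le> t" for k
      proof (induction k)
        case 0 then show ?case using t0 by simp
      next
        case (Suc k)
        have "real k *\<^sub>R c \<in> S" unfolding S_def N_def
          using NN_scale_nat[OF nv cN[unfolded N_def]] scaleR_nat_nonneg[OF c0] Suc.IH by blast
        then have "real k *\<^sub>R c \<le> v'" unfolding v'_def using v Suc.IH by simp
        moreover have "c \<le> r" unfolding c_def by simp
        ultimately have "real k *\<^sub>R c + c \<le> v' + r" by (rule add_mono)
        then show ?case unfolding scaleR_Suc_nat r_def by simp
      qed
      then have "c = 0" using arch_zero[OF arch c0] by blast
      then show "inf (labs r) (labs n) = 0" unfolding c_def using r0 by (simp add: labs_pos)
    qed
    have "inf t (labs r) = 0" using perp rdc unfolding N_def by blast
    then have "inf t r = 0" using r0 by (simp add: labs_pos)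
    moreover have "inf t r = r" using rt by (simp add: inf_absorb2)
    ultimately have "r = 0" by simp
    then have "t = v'" unfolding r_def by simp
    then show "t \<le> v" unfolding v'_def by (metis inf_le1)
  qed
  have "t \<in> V j" for j
  proof -
    have "nhd0 \<tau> (V (Suc j))" by (rule ns_nhd0[OF nv])
    then obtain x where x: "x \<in> S" "t - x \<in> V (Suc j)"
      using dir_sup_approx[OF uo Sne Sdir sup] by blast
    have "x \<in> V (Suc j)" using x(1) unfolding S_def N_def by blast
    then have "(t - x) + x \<in> V j" by (rule ns_step[OF nv x(2)])
    then show ?thesis by simp
  qed
  then show ?thesis by blast
qed

lemma NS_UNIV:
  fixes \<tau> :: "'a::{ordered_real_vector,lattice} topology"
  assumes "linear_topology \<tau>"
  shows "NS \<tau> (\<lambda>_. UNIV)"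
  unfolding NS_def normal_seq_def using nhd0_UNIV[OF assms] solid_UNIV by auto

lemma csp_carrier:
  fixes \<tau> :: "'a::{ordered_real_vector,lattice} topology"
  assumes arch: "archimedean_vl TYPE('a)" and uo: "uo_Lebesgue \<tau>"
    and csp: "countable_sup_property TYPE('a)"
  shows "\<exists>V. NS \<tau> V \<and> e \<in> disj_compl (\<Inter>j. V j)"
proof -
  have ls: "locally_solid \<tau>" using uo unfolding uo_Lebesgue_def by blast
  have lt: "linear_topology \<tau>" using ls unfolding locally_solid_def by blast
  define e' where "e' = labs e"
  have e0: "0 \<le> e'" unfolding e'_def by (rule labs_nonneg)
  define A where "A = {a. 0 \<le> a \<and> a \<le> e' \<and> (\<exists>V. NS \<tau> V \<and> a \<in> disj_compl (\<Inter>j. V j))}"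
  have supA: "is_sup_of A e'"
    unfolding is_sup_of_def
  proof (intro conjI allI impI ballI)
    fix x assume "x \<in> A" then show "x \<le> e'" unfolding A_def by simp
  next
    fix u assume u: "\<forall>a\<in>A. a \<le> u"
    define u' where "u' = inf u e'"
    define t where "t = e' - u'"
    have t0: "0 \<le> t" unfolding t_def u'_def by simp
    have "t = 0"
    proof (rule ccontr)
      assume "t \<noteq> 0"
      then obtain U where U: "nhd0 \<tau> U" "t \<notin> U" using lt_separate[OF lt] by blast
      then obtain V where V: "NS \<tau> V" "V 0 \<subseteq> U" using ns_exists[OF ls] by blast
      have perp: "inf t (labs b) = 0" if b: "b \<in> disj_compl (\<Inter>j. V j)" for b
      proof -
        define a where "a = inf t (labs b)"
        have a0: "0 \<le> a" unfolding a_def using t0 by (simp add: labs_nonneg)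
        have "labs a = a" by (rule labs_pos[OF a0])
        also have "\<dots> \<le> labs b" unfolding a_def by simp
        finally have adc: "a \<in> disj_compl (\<Inter>j. V j)"
          by (rule dc_solid[OF b])
        have "real k *\<^sub>R a \<le> e'" for k
        proof (induction k)
          case 0 then show ?case using e0 by simp
        next
          case (Suc k)
          have "real k *\<^sub>R a \<in> A" unfolding A_def
            using dc_scale_nat[OF a0 adc] scaleR_nat_nonneg[OF a0] Suc.IH V(1) by blast
          then have "real k *\<^sub>R a \<le> u'" unfolding u'_def using u Suc.IH by simp
          moreover have "a \<le> t" unfolding a_def by simp
          ultimately have "real k *\<^sub>R a + a \<le> u' + t" by (rule add_mono)
          then show ?case unfolding scaleR_Suc_nat t_def by simp
        qed
        then have "a = 0" using arch_zero[OF arch a0] by blast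
        then show ?thesis unfolding a_def .
      qed
      have "t \<in> (\<Inter>j. V j)" by (rule NN_band[OF arch uo V(1) t0 perp])
      then have "t \<in> U" using V(2) by blast
      then show False using U(2) by blast
    qed
    then have "e' = u'" unfolding t_def by simp
    then show "e' \<le> u" unfolding u'_def by (metis inf_le1)
  qed
  obtain T where T: "T \<subseteq> A" "countable T" "is_sup_of T e'"
    using csp supA unfolding countable_sup_property_def by blast
  show ?thesis
  proof (cases "T = {}")
    case True
    then have "e' \<le> 0" using T(3) unfolding is_sup_of_def by blast
    then have "e' = 0" using e0 by simp
    then have "e = 0" unfolding e'_def by (simp add: labs_zero_iff)
    then have "e \<in> disj_compl (\<Inter>j. (\<lambda>_. UNIV) j)"
      unfolding disj_compl_def by (simp add: labs_nonneg inf_absorb1)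
    then show ?thesis using NS_UNIV[OF lt] by blast
  next
    case False
    define tt where "tt = from_nat_into T"
    have ttA: "tt i \<in> A" for i unfolding tt_def using from_nat_into[OF False] T(1) by blast
    have exV: "\<exists>V. NS \<tau> V \<and> tt i \<in> disj_compl (\<Inter>j. V j)" for i using ttA[of i] unfolding A_def by blast
    define VV where "VV i = (SOME V. NS \<tau> V \<and> tt i \<in> disj_compl (\<Inter>j. V j))" for i
    have VV: "NS \<tau> (VV i) \<and> tt i \<in> disj_compl (\<Inter>j. VV i j)" for i
      unfolding VV_def by (rule someI_ex[OF exV])
    define W where "W = (\<lambda>j. \<Inter>i\<in>{..<j}. VV i j)"
    have NSW: "NS \<tau> W" and WV: "\<And>i. (\<Inter>j. W j) \<subseteq> (\<Inter>j. VV i j)"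
      unfolding W_def using ns_diag[OF lt, of VV] VV by auto
    have ttW: "tt i \<in> disj_compl (\<Inter>j. W j)" for i
      using dc_anti[OF WV[of i]] VV[of i] by blast
    have "e' \<in> disj_compl (\<Inter>j. W j)"
      unfolding disj_compl_def
    proof (intro CollectI ballI)
      fix b assume b: "b \<in> (\<Inter>j. W j)"
      define c where "c = inf e' (labs b)"
      have c0: "0 \<le> c" unfolding c_def using e0 by (simp add: labs_nonneg)
      have "labs c = c" by (rule labs_pos[OF c0])
      also have "\<dots> \<le> labs b" unfolding c_def by simp
      finally have cW: "c \<in> (\<Inter>j. W j)" by (rule solid_mem[OF NN_solid[OF NSW] b])
      have "s \<le> e' - c" if s: "s \<in> T" for s
      proof -
        obtain i where si: "s = tt i" using from_nat_into_surj[OF T(2) s] unfolding tt_def by metis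
        have sA: "0 \<le> s" "s \<le> e'" using ttA[of i] si unfolding A_def by auto
        have "inf (labs s) (labs c) = 0" using ttW[of i] cW si unfolding disj_compl_def by blast
        then have "inf s c = 0" using sA(1) c0 by (simp add: labs_pos)
        then have "s + c = sup s c" by (rule disj_add_eq_sup)
        also have "\<dots> \<le> e'" using sA(2) unfolding c_def by simp
        finally show ?thesis by (simp add: le_diff_eq)
      qed
      then have "e' \<le> e' - c" using T(3) unfolding is_sup_of_def by blast
      then have "c \<le> 0" by (simp add: le_diff_eq)
      then have "c = 0" using c0 by simp
      then show "inf (labs e') (labs b) = 0" unfolding c_def using e0 by (simp add: labs_pos)
    qed
    then have "e \<in> disj_compl (\<Inter>j. W j)" unfolding e'_def by (simp add: dc_labs)
    then show ?thesis using NSW by blast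
  qed
qed



lemma net_eventually:
  assumes dir: "directed_set I le"
  shows "eventually P (net_filter I le) \<longleftrightarrow> (\<exists>a\<in>I. \<forall>b\<in>I. le a b \<longrightarrow> P b)"
proof -
  have Ine: "I \<noteq> {}" using dir unfolding directed_set_def by blast
  have "eventually P (net_filter I le) \<longleftrightarrow> (\<exists>a\<in>I. eventually P (principal {b\<in>I. le a b}))"
    unfolding net_filter_def
  proof (rule eventually_INF_base[OF Ine])
    fix a b assume ab: "a \<in> I" "b \<in> I"
    then obtain c where c: "c \<in> I" "le a c" "le b c" using dir unfolding directed_set_def by blast
    have "{y\<in>I. le c y} \<subseteq> {y\<in>I. le a y} \<inter> {y\<in>I. le b y}"
      using c ab dir unfolding directed_set_def by blast
    then have "principal {y\<in>I. le c y} \<le> inf (principal {y\<in>I. le a y}) (principal {y\<in>I. le b y})"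
      by (simp add: inf_principal)
    then show "\<exists>x\<in>I. principal {y\<in>I. le x y} \<le> inf (principal {y\<in>I. le a y}) (principal {y\<in>I. le b y})"
      using c(1) by blast
  qed
  then show ?thesis by (auto simp add: eventually_principal)
qed

lemma part1:
  fixes \<tau> :: "'a::{ordered_real_vector,lattice} topology" and f :: "'i \<Rightarrow> 'a"
  assumes arch: "archimedean_vl TYPE('a)" and uo: "uo_Lebesgue \<tau>"
    and carr: "\<And>e. \<exists>V. NS \<tau> V \<and> e \<in> disj_compl (\<Inter>j. V j)"
    and dir: "directed_set I le" and tc: "top_conv \<tau> (net_filter I le) f x"
  shows "\<exists>\<alpha>. embedded_seq I le \<alpha> \<and> uo_conv sequentially (f \<circ> \<alpha>) x
                  \<and> top_conv \<tau> sequentially (f \<circ> \<alpha>) x"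
proof -
  have lt: "linear_topology \<tau>" using uo unfolding uo_Lebesgue_def locally_solid_def by blast
  define h where "h i = f i - x" for i
  define nomax where "nomax = (\<not> (\<exists>m\<in>I. \<forall>a\<in>I. le a m))"
  have trans: "\<And>a b c. a \<in> I \<Longrightarrow> b \<in> I \<Longrightarrow> c \<in> I \<Longrightarrow> le a b \<Longrightarrow> le b c \<Longrightarrow> le a c"
    using dir unfolding directed_set_def by blast
  have updir: "\<And>a b. a \<in> I \<Longrightarrow> b \<in> I \<Longrightarrow> \<exists>c\<in>I. le a c \<and> le b c"
    using dir unfolding directed_set_def by blast
  have pick: "\<exists>a'. a' \<in> I \<and> le a a' \<and> (nomax \<longrightarrow> \<not> le a' a) \<and> h a' \<in> U"
    if a: "a \<in> I" and U: "nhd0 \<tau> U" for a U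
  proof -
    have "eventually (\<lambda>i. f i - x \<in> U) (net_filter I le)" by (rule top_conv_nhd0[OF lt tc U])
    then obtain b where b: "b \<in> I" "\<forall>c\<in>I. le b c \<longrightarrow> h c \<in> U"
      unfolding net_eventually[OF dir] h_def by blast
    obtain c where c: "c \<in> I" "le a c" "le b c" using updir[OF a b(1)] by blast
    show ?thesis
    proof (cases nomax)
      case False
      then show ?thesis using c b by blast
    next
      case True
      then obtain d where d: "d \<in> I" "\<not> le d c" unfolding nomax_def using c(1) by blast
      obtain c' where c': "c' \<in> I" "le c c'" "le d c'" using updir[OF c(1) d(1)] by blast
      have "\<not> le c' a"
      proof
        assume "le c' a"
        then have "le d a" using trans[OF d(1) c'(1) a c'(3)] by blast
        then have "le d c" using trans[OF d(1) a c(1) _ c(2)] by blast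
        then show False using d(2) by blast
      qed
      moreover have "le a c'" using trans[OF a c(1) c'(1) c(2) c'(2)] .
      moreover have "le b c'" using trans[OF b(1) c(1) c'(1) c(3) c'(2)] .
      ultimately show ?thesis using c'(1) b(2) by blast
    qed
  qed
  define Vof where "Vof e = (SOME V. NS \<tau> V \<and> e \<in> disj_compl (\<Inter>j. V j))" for e
  have Vof: "NS \<tau> (Vof e) \<and> e \<in> disj_compl (\<Inter>j. Vof e j)" for e
    unfolding Vof_def by (rule someI_ex[OF carr])
  define P where "P a U = (SOME a'. a' \<in> I \<and> le a a' \<and> (nomax \<longrightarrow> \<not> le a' a) \<and> h a' \<in> U)" for a U
  have Pp: "P a U \<in> I \<and> le a (P a U) \<and> (nomax \<longrightarrow> \<not> le (P a U) a) \<and> h (P a U) \<in> U"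
    if "a \<in> I" "nhd0 \<tau> U" for a U
    unfolding P_def by (rule someI_ex[OF pick[OF that]])
  have Ine: "I \<noteq> {}" using dir unfolding directed_set_def by blast
  define a0 where "a0 = (SOME a. a \<in> I)"
  have a0: "a0 \<in> I" unfolding a0_def using Ine by (simp add: some_in_eq)
  define R where "R = rec_nat (a0, Vof (h a0))
     (\<lambda>n p. (P (fst p) (snd p (Suc n)), \<lambda>j. snd p j \<inter> Vof (h (P (fst p) (snd p (Suc n)))) j))"
  define \<alpha> where "\<alpha> n = fst (R n)" for n
  define Z where "Z n = snd (R n)" for n
  have \<alpha>0: "\<alpha> 0 = a0" and Z0: "Z 0 = Vof (h a0)" unfolding \<alpha>_def Z_def R_def by simp_all
  have \<alpha>S: "\<alpha> (Suc n) = P (\<alpha> n) (Z n (Suc n))" for n unfolding \<alpha>_def Z_def R_def by simp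
  have ZS: "Z (Suc n) j = Z n j \<inter> Vof (h (\<alpha> (Suc n))) j" for n j
    unfolding \<alpha>_def Z_def R_def by simp
  define VV where "VV i = Vof (h (\<alpha> i))" for i
  have Zform: "Z n j = (\<Inter>i\<in>{..n}. VV i j)" for n j
  proof (induction n)
    case 0 then show ?case unfolding VV_def using Z0 \<alpha>0 by simp
  next
    case (Suc n) then show ?case unfolding VV_def using ZS by (simp add: atMost_Suc Int_commute)
  qed
  define W where "W = (\<lambda>j. \<Inter>i\<in>{..<j}. VV i j)"
  have NSW: "NS \<tau> W" and WV: "\<And>i. (\<Inter>j. W j) \<subseteq> (\<Inter>j. VV i j)"
    unfolding W_def using ns_diag[OF lt, of VV] Vof unfolding VV_def by auto
  have WZ: "W (Suc n) = Z n (Suc n)" for n unfolding W_def Zform by (simp add: lessThan_Suc_atMost)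
  have nvW: "normal_seq \<tau> W" using NSW unfolding NS_def by blast
  have \<alpha>I: "\<alpha> n \<in> I" for n
  proof (induction n)
    case 0 then show ?case using \<alpha>0 a0 by simp
  next
    case (Suc n)
    have "nhd0 \<tau> (Z n (Suc n))" using ns_nhd0[OF nvW, of "Suc n"] WZ by simp
    then show ?case using Pp[OF Suc.IH] \<alpha>S by simp
  qed
  have step: "le (\<alpha> n) (\<alpha> (Suc n)) \<and> (nomax \<longrightarrow> \<not> le (\<alpha> (Suc n)) (\<alpha> n)) \<and> h (\<alpha> (Suc n)) \<in> W (Suc n)" for n
  proof -
    have "nhd0 \<tau> (Z n (Suc n))" using ns_nhd0[OF nvW, of "Suc n"] WZ by simp
    then show ?thesis using Pp[OF \<alpha>I[of n]] \<alpha>S WZ by simp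
  qed
  have hW: "h (\<alpha> n) \<in> W n" for n
  proof (cases n)
    case 0 then show ?thesis unfolding W_def by simp
  next
    case (Suc m) then show ?thesis using step[of m] by simp
  qed
  have hdc: "h (\<alpha> n) \<in> disj_compl (\<Inter>j. W j)" for n
    using dc_anti[OF WV[of n]] Vof[of "h (\<alpha> n)"] unfolding VV_def by blast
  have "uo_conv sequentially (\<lambda>n. h (\<alpha> n)) 0"
    by (rule seq_uo_null[OF arch uo NSW hW hdc])
  then have uoc: "uo_conv sequentially (f \<circ> \<alpha>) x"
    unfolding uo_conv_def h_def by simp
  have "embedded_seq I le \<alpha>"
    unfolding embedded_seq_def using \<alpha>I step unfolding nomax_def by blast
  moreover have "top_conv \<tau> sequentially (f \<circ> \<alpha>) x" by (rule uo_top[OF uo uoc])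
  ultimately show ?thesis using uoc by blast
qed

lemma net_filter_nat: "net_filter (UNIV::nat set) (\<le>) = sequentially"
  unfolding net_filter_def at_top_def by (simp add: atLeast_def)

theorem theorem5p8:
  fixes \<tau> :: "'a::{ordered_real_vector,lattice} topology"
  assumes "archimedean_vl TYPE('a)"
    and "locally_solid \<tau>"
    and "uo_Lebesgue \<tau>"
    and "carrier_top \<tau> = UNIV \<or> countable_sup_property TYPE('a)"
  shows "(\<forall>(I::'i set) le (f::'i \<Rightarrow> 'a) x.
            directed_set I le \<and> top_conv \<tau> (net_filter I le) f x \<longrightarrow>
            (\<exists>\<alpha>. embedded_seq I le \<alpha> \<and> uo_conv sequentially (f \<circ> \<alpha>) x
                  \<and> top_conv \<tau> sequentially (f \<circ> \<alpha>) x))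
       \<and> (\<forall>(s::nat \<Rightarrow> 'a) x.
            top_conv \<tau> sequentially s x \<longleftrightarrow>
            (\<forall>r::nat \<Rightarrow> nat. strict_mono r \<longrightarrow> (\<exists>r'::nat \<Rightarrow> nat. strict_mono r' \<and> uo_conv sequentially (s \<circ> r \<circ> r') x)))"
proof -
  note arch = assms(1) and uo = assms(3)
  have lt: "linear_topology \<tau>" using assms(2) unfolding locally_solid_def by blast
  have carr: "\<exists>V. NS \<tau> V \<and> e \<in> disj_compl (\<Inter>j. V j)" for e
  proof (cases "carrier_top \<tau> = UNIV")
    case True
    then have "e \<in> carrier_top \<tau>" by simp
    then show ?thesis unfolding carrier_top_def NS_def by blast
  next
    case False
    then have "countable_sup_property TYPE('a)" using assms(4) by blast
    then show ?thesis by (rule csp_carrier[OF arch uo])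
  qed
  have P1: "\<forall>(I::'i set) le (f::'i \<Rightarrow> 'a) x.
            directed_set I le \<and> top_conv \<tau> (net_filter I le) f x \<longrightarrow>
            (\<exists>\<alpha>. embedded_seq I le \<alpha> \<and> uo_conv sequentially (f \<circ> \<alpha>) x
                  \<and> top_conv \<tau> sequentially (f \<circ> \<alpha>) x)"
    using part1[OF arch uo carr] by blast
  have P2: "top_conv \<tau> sequentially s x \<longleftrightarrow>
            (\<forall>r::nat \<Rightarrow> nat. strict_mono r \<longrightarrow> (\<exists>r'::nat \<Rightarrow> nat. strict_mono r' \<and> uo_conv sequentially (s \<circ> r \<circ> r') x))"
    for s :: "nat \<Rightarrow> 'a" and x
  proof
    assume tc: "top_conv \<tau> sequentially s x"
    show "\<forall>r::nat \<Rightarrow> nat. strict_mono r \<longrightarrow> (\<exists>r'::nat \<Rightarrow> nat. strict_mono r' \<and> uo_conv sequentially (s \<circ> r \<circ> r') x)"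
    proof (intro allI impI)
      fix r :: "nat \<Rightarrow> nat" assume r: "strict_mono r"
      have tcr: "top_conv \<tau> sequentially (s \<circ> r) x"
        unfolding top_conv_def
      proof (intro allI impI)
        fix U assume "openin \<tau> U \<and> x \<in> U"
        then have "eventually (\<lambda>i. s i \<in> U) sequentially" using tc unfolding top_conv_def by blast
        then obtain N where N: "\<forall>n\<ge>N. s n \<in> U" unfolding eventually_sequentially by blast
        have "\<forall>n\<ge>N. (s \<circ> r) n \<in> U"
        proof (intro allI impI)
          fix n assume "N \<le> n"
          then have "N \<le> r n" using seq_suble[OF r, of n] by simp
          then show "(s \<circ> r) n \<in> U" using N by simp
        qed
        then show "eventually (\<lambda>i. (s \<circ> r) i \<in> U) sequentially" unfolding eventually_sequentially by blast
      qed
      have dirN: "directed_set (UNIV::nat set) (\<le>)"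
        unfolding directed_set_def by (auto intro: max.cobounded1 max.cobounded2)
      have "top_conv \<tau> (net_filter (UNIV::nat set) (\<le>)) (s \<circ> r) x"
        using tcr by (simp add: net_filter_nat)
      then obtain \<alpha> where \<alpha>: "embedded_seq (UNIV::nat set) (\<le>) \<alpha>" "uo_conv sequentially (s \<circ> r \<circ> \<alpha>) x"
        using part1[OF arch uo carr dirN] by blast
      have "\<not> (\<exists>m\<in>(UNIV::nat set). \<forall>a\<in>UNIV. a \<le> m)" by (metis UNIV_I not_less_eq_eq order_refl)
      then have "\<forall>n. \<not> \<alpha> (Suc n) \<le> \<alpha> n" using \<alpha>(1) unfolding embedded_seq_def by blast
      then have "strict_mono \<alpha>" unfolding strict_mono_Suc_iff by (simp add: not_le)
      then show "\<exists>r'::nat \<Rightarrow> nat. strict_mono r' \<and> uo_conv sequentially (s \<circ> r \<circ> r') x"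
        using \<alpha>(2) by blast
    qed
  next
    assume H: "\<forall>r::nat \<Rightarrow> nat. strict_mono r \<longrightarrow> (\<exists>r'::nat \<Rightarrow> nat. strict_mono r' \<and> uo_conv sequentially (s \<circ> r \<circ> r') x)"
    show "top_conv \<tau> sequentially s x"
      unfolding top_conv_def
    proof (intro allI impI)
      fix U assume U: "openin \<tau> U \<and> x \<in> U"
      show "eventually (\<lambda>i. s i \<in> U) sequentially"
      proof (rule ccontr)
        assume ne: "\<not> eventually (\<lambda>i. s i \<in> U) sequentially"
        have "infinite {n. s n \<notin> U}"
        proof
          assume "finite {n. s n \<notin> U}"
          then obtain m where m: "\<forall>n\<in>{n. s n \<notin> U}. n < m" unfolding finite_nat_set_iff_bounded by blast
          have "\<forall>n\<ge>m. s n \<in> U"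
          proof (intro allI impI)
            fix n assume "m \<le> n"
            then show "s n \<in> U" using m by (metis mem_Collect_eq not_le)
          qed
          then show False using ne unfolding eventually_sequentially by blast
        qed
        then obtain r :: "nat \<Rightarrow> nat" where r: "strict_mono r" "\<forall>n. r n \<in> {n. s n \<notin> U}"
          using infinite_enumerate by blast
        then obtain r' where r': "strict_mono r'" "uo_conv sequentially (s \<circ> r \<circ> r') x" using H by blast
        have "top_conv \<tau> sequentially (s \<circ> r \<circ> r') x" by (rule uo_top[OF uo r'(2)])
        then have "eventually (\<lambda>i. (s \<circ> r \<circ> r') i \<in> U) sequentially" using U unfolding top_conv_def by blast
        then obtain N where "\<forall>n\<ge>N. (s \<circ> r \<circ> r') n \<in> U" unfolding eventually_sequentially by blast
        then have "s (r (r' N)) \<in> U" by simp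
        moreover have "s (r (r' N)) \<notin> U" using r(2) by blast
        ultimately show False by blast
      qed
    qed
  qed
  show ?thesis using P1 P2 by blast
qed


end
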